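(* Let $\nu_0=\mathcal N(0,\tau_0^{-2})$ and $\nu_1=\mathcal N(0,\tau_1^{-2})$ (identified with their densities on $\mathbb{R}$) with $0<\tau_1^2<\tau_0^2$, let $\eta\in[0,1)$, and define $\xi(x)=-\log\big(\eta\,\nu_0(x)+(1-\eta)\,\nu_1(x)\big)$. Then for all $x\in\mathbb{R}$, $$\xi''(x)\ge\tau_1^2-2(\tau_0^2-\tau_1^2)\log\Big(1+\frac{\eta\tau_0}{(1-\eta)e\tau_1}\Big).$$ *)

theory Defs
  imports "HOL-Probability.Probability"
begin

definition gauss_prec :: "real \<Rightarrow> real \<Rightarrow> real" where
  "gauss_prec \<tau> x = normal_density 0 (1 / \<tau>) x"

end

theory Submission
  imports Defs
begin

lemma key:
  fixes r t :: real assumes r: "r \<ge> 0" and t: "t \<ge> 0"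
  shows "t * r / (1 + r)^2 \<le> ln (1 + r * exp (t - 1))"
proof -
  define l where "l = r / (1 + r)^2"
  define K where "K = (1 + r)^2 / (1 + r + r^2)"
  define d where "d = t - 1 + ln (1 + r + r^2)"
  have pos: "1 + r + r^2 > 0" using r by (smt (verit) zero_le_power2)
  have l0: "0 \<le> l" "l \<le> 1" using r by (auto simp: l_def divide_le_eq power2_eq_square algebra_simps)
  have K0: "K > 0" using pos r by (simp add: K_def)
  have conv: "exp ((1 - l) *\<^sub>R 0 + l *\<^sub>R d) \<le> (1 - l) * exp 0 + l * exp d"
    using convex_onD[OF exp_convex, of l 0 d] l0 by simp
  hence c2: "exp (l * d) \<le> (1 - l) + l * exp d" by simp
  have ed: "exp d = exp (t - 1) * (1 + r + r^2)" using pos by (simp add: d_def exp_add exp_diff)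
  have p1: "(1 + r)^2 > 0" using r by simp
  have "1 - l = (1 + r + r^2) / (1 + r)^2" unfolding l_def using p1
    by (simp add: diff_divide_distrib[symmetric] power2_eq_square algebra_simps add_divide_distrib[symmetric])
  hence e1: "K * (1 - l) = 1" unfolding K_def using pos p1 by simp
  have e2: "K * l = r / (1 + r + r^2)" unfolding K_def l_def using pos p1 by simp
  have eq: "1 + r * exp (t - 1) = K * ((1 - l) + l * exp d)"
  proof -
    have "K * ((1 - l) + l * exp d) = K * (1 - l) + (K * l) * exp d" by (simp add: algebra_simps)
    also have "\<dots> = 1 + r * exp (t - 1)" using e1 e2 pos unfolding ed by simp
    finally show ?thesis by simp
  qed
  have lK: "1 - l = 1 / K" using e1 K0 by (simp add: field_simps)
  have "0 < 1 - l" using lK K0 by simp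
  moreover have "0 \<le> l * exp d" using l0 by simp
  ultimately have inner: "0 < (1 - l) + l * exp d" by linarith
  have "ln (1 + r * exp (t - 1)) = ln K + ln ((1 - l) + l * exp d)"
    using eq K0 inner by (simp add: ln_mult)
  moreover have "ln ((1 - l) + l * exp d) \<ge> l * d"
    using c2 inner by (metis ln_exp ln_le_cancel_iff exp_gt_zero)
  moreover have "ln K \<ge> l"
  proof -
    have "ln (1 / K) \<le> 1 / K - 1" using K0 by (intro ln_le_minus_one) simp
    moreover have "1 / K - 1 = - l" using lK by simp
    ultimately show ?thesis using K0 by (simp add: ln_div)
  qed
  moreover have "ln (1 + r + r^2) \<ge> 0" using r by simp
  ultimately have "ln (1 + r * exp (t - 1)) \<ge> l + l * d" by linarith
  moreover have "l + l * d = l * t + l * ln (1 + r + r^2)" by (simp add: d_def algebra_simps)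
  moreover have "l * ln (1 + r + r^2) \<ge> 0" using l0 \<open>ln (1 + r + r^2) \<ge> 0\<close> by simp
  ultimately show ?thesis unfolding l_def by (simp add: field_simps)
qed


lemma gauss_eq: assumes "\<tau> > 0"
  shows "gauss_prec \<tau> x = \<tau> / sqrt (2 * pi) * exp (- (\<tau>^2 / 2 * x^2))"
proof -
  have "sqrt (2 * pi * (1 / \<tau>)\<^sup>2) = sqrt (2 * pi) / \<tau>"
    using assms by (simp add: real_sqrt_mult real_sqrt_divide power_divide)
  moreover have "- (x - 0)\<^sup>2 / (2 * (1 / \<tau>)\<^sup>2) = - (\<tau>^2 / 2 * x^2)"
    using assms by (simp add: power_divide field_simps)
  ultimately show ?thesis unfolding gauss_prec_def normal_density_def by simp
qed

lemma d1:
  fixes A B q0 q1 x :: real assumes "A \<ge> 0" "B > 0"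
  shows "((\<lambda>x. - ln (A * exp (- (q0 * x^2)) + B * exp (- (q1 * x^2)))) has_real_derivative
     (2 * x * (q0 * A * exp (- (q0 * x^2)) + q1 * B * exp (- (q1 * x^2))) / (A * exp (- (q0 * x^2)) + B * exp (- (q1 * x^2))))) (at x)"
proof -
  have pos: "\<And>x. A * exp (- (q0 * x^2)) + B * exp (- (q1 * x^2)) > 0"
    using assms by (smt (verit) exp_gt_zero mult_nonneg_nonneg mult_pos_pos)
  have ne: "A * exp (- (q0 * x^2)) + B * exp (- (q1 * x^2)) \<noteq> 0" using pos[of x] by simp
  show ?thesis
    apply (rule derivative_eq_intros refl pos | simp)+
    using ne by (simp add: field_simps)
qed

lemma aux2:
  fixes P N M x :: real assumes "P \<noteq> 0"
  shows "((2*N - 4*x^2*M)*P - 2*x*N*(-2*x*N))/(P*P) = 2*N/P - 4*x^2*M/P + 4*x^2*N^2/P^2"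
  using assms by (simp add: field_simps power2_eq_square)

lemma alg2:
  fixes A B q0 q1 x E0 E1 :: real assumes ne: "A * E0 + B * E1 \<noteq> 0"
  shows "(((0 * x + 1 * 2) *
       (q0 * A * E0 + q1 * B * E1) +
       (0 * E0 +
        E0 *
        - (0 * x\<^sup>2 + real 2 * (1 * x ^ (2 - Suc 0)) * q0) *
        (q0 * A) +
        (0 * E1 +
         E1 *
         - (0 * x\<^sup>2 + real 2 * (1 * x ^ (2 - Suc 0)) * q1) *
         (q1 * B))) *
       (2 * x)) *
      (A * E0 + B * E1) -
      2 * x * (q0 * A * E0 + q1 * B * E1) *
      (0 * E0 +
       E0 * - (0 * x\<^sup>2 + real 2 * (1 * x ^ (2 - Suc 0)) * q0) *
       A +
       (0 * E1 +
        E1 *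
        - (0 * x\<^sup>2 + real 2 * (1 * x ^ (2 - Suc 0)) * q1) *
        B))) /
     ((A * E0 + B * E1) *
      (A * E0 + B * E1)) =
     (let a = A * E0; b = B * E1; P = a + b;
          N = q0 * a + q1 * b; M = q0\<^sup>2 * a + q1\<^sup>2 * b
      in 2 * N / P - 4 * x\<^sup>2 * M / P + 4 * x\<^sup>2 * N\<^sup>2 / P\<^sup>2)"
proof -
  have U: "((0 * x + 1 * 2) *
       (q0 * A * E0 + q1 * B * E1) +
       (0 * E0 +
        E0 *
        - (0 * x\<^sup>2 + real 2 * (1 * x ^ (2 - Suc 0)) * q0) *
        (q0 * A) +
        (0 * E1 +
         E1 *
         - (0 * x\<^sup>2 + real 2 * (1 * x ^ (2 - Suc 0)) * q1) *
         (q1 * B))) *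
       (2 * x)) = 2 * (q0 * (A * E0) + q1 * (B * E1)) - 4 * x^2 * (q0\<^sup>2 * (A * E0) + q1\<^sup>2 * (B * E1))"
    by (simp add: algebra_simps power2_eq_square)
  have W: "(0 * E0 +
       E0 * - (0 * x\<^sup>2 + real 2 * (1 * x ^ (2 - Suc 0)) * q0) *
       A +
       (0 * E1 +
        E1 *
        - (0 * x\<^sup>2 + real 2 * (1 * x ^ (2 - Suc 0)) * q1) *
        B)) = -2 * x * (q0 * (A * E0) + q1 * (B * E1))"
    by (simp add: algebra_simps power2_eq_square)
  have V: "q0 * A * E0 + q1 * B * E1 = q0 * (A * E0) + q1 * (B * E1)" by (simp add: algebra_simps)
  show ?thesis unfolding U unfolding W unfolding V Let_def by (rule aux2[OF ne])
qed

lemma d2: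
  fixes A B q0 q1 x :: real assumes "A \<ge> 0" "B > 0"
  shows "((\<lambda>x. 2 * x * (q0 * A * exp (- (q0 * x^2)) + q1 * B * exp (- (q1 * x^2))) / (A * exp (- (q0 * x^2)) + B * exp (- (q1 * x^2)))) has_real_derivative
     (let a = A * exp (- (q0 * x^2)); b = B * exp (- (q1 * x^2)); P = a + b;
          N = q0 * a + q1 * b; M = q0^2 * a + q1^2 * b
      in 2 * N / P - 4 * x^2 * M / P + 4 * x^2 * N^2 / P^2)) (at x)"
proof -
  have pos: "\<And>x. A * exp (- (q0 * x^2)) + B * exp (- (q1 * x^2)) > 0"
    using assms by (smt (verit) exp_gt_zero mult_nonneg_nonneg mult_pos_pos)
  have ne: "A * exp (- (q0 * x^2)) + B * exp (- (q1 * x^2)) \<noteq> 0" using pos[of x] by simp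
  show ?thesis
    apply (rule derivative_eq_intros refl ne)+
    by (rule alg2[OF ne])
qed

lemma alg3:
  fixes a b x s0 s1 :: real assumes "a + b \<noteq> 0"
  shows "(let P = a + b; N = s0 / 2 * a + s1 / 2 * b; M = (s0 / 2)^2 * a + (s1 / 2)^2 * b
      in 2 * N / P - 4 * x^2 * M / P + 4 * x^2 * N^2 / P^2)
    = s1 + (s0 - s1) * (a / (a + b)) - x^2 * (s0 - s1)^2 * (a * b / (a + b)^2)"
proof -
  define P where "P = a + b"
  have hb: "b = P - a" by (simp add: P_def)
  have P0: "P \<noteq> 0" using assms by (simp add: P_def)
  have aP: "a + b = P" by (simp add: P_def)
  show ?thesis
    unfolding Let_def aP using P0
    apply (simp add: field_simps)
    apply (simp add: hb algebra_simps power2_eq_square eval_nat_numeral)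
    done
qed

lemma final:
  fixes \<tau>0 \<tau>1 \<eta> x :: real
  assumes t0: "\<tau>0 > 0" and t1: "\<tau>1 > 0" and lt: "\<tau>1\<^sup>2 < \<tau>0\<^sup>2"
    and e0: "0 \<le> \<eta>" and e1: "\<eta> < 1"
  shows "(let a = (\<eta> * (\<tau>0 / sqrt (2 * pi))) * exp (- (\<tau>0^2 / 2 * x^2));
              b = ((1 - \<eta>) * (\<tau>1 / sqrt (2 * pi))) * exp (- (\<tau>1^2 / 2 * x^2)); P = a + b;
          N = \<tau>0^2 / 2 * a + \<tau>1^2 / 2 * b; M = (\<tau>0^2 / 2)^2 * a + (\<tau>1^2 / 2)^2 * b
      in 2 * N / P - 4 * x^2 * M / P + 4 * x^2 * N^2 / P^2) \<ge>
    \<tau>1\<^sup>2 - 2 * (\<tau>0\<^sup>2 - \<tau>1\<^sup>2) * ln (1 + (\<eta> * \<tau>0) / ((1 - \<eta>) * exp 1 * \<tau>1))"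
proof -
  define a where "a = (\<eta> * (\<tau>0 / sqrt (2 * pi))) * exp (- (\<tau>0^2 / 2 * x^2))"
  define b where "b = ((1 - \<eta>) * (\<tau>1 / sqrt (2 * pi))) * exp (- (\<tau>1^2 / 2 * x^2))"
  define D where "D = \<tau>0\<^sup>2 - \<tau>1\<^sup>2"
  define t where "t = D * x^2 / 2"
  define c where "c = \<eta> * \<tau>0 / ((1 - \<eta>) * \<tau>1)"
  define L where "L = ln (1 + (\<eta> * \<tau>0) / ((1 - \<eta>) * exp 1 * \<tau>1))"
  have D0: "D > 0" using lt by (simp add: D_def)
  have t0': "t \<ge> 0" using D0 by (simp add: t_def)
  have a0: "a \<ge> 0" using e0 t0 by (simp add: a_def)
  have b0: "b > 0" using e1 t1 by (simp add: b_def)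
  have P0: "a + b > 0" using a0 b0 by simp
  have r0: "a / b \<ge> 0" using a0 b0 by simp
  have ab: "a / b = c * exp (- t)"
  proof -
    have "a / b = (\<eta> * \<tau>0 / ((1 - \<eta>) * \<tau>1)) * (exp (- (\<tau>0^2 / 2 * x^2)) / exp (- (\<tau>1^2 / 2 * x^2)))"
      unfolding a_def b_def using e1 t1 by (simp add: field_simps)
    also have "exp (- (\<tau>0^2 / 2 * x^2)) / exp (- (\<tau>1^2 / 2 * x^2)) = exp (- t)"
      unfolding t_def D_def by (simp add: exp_diff[symmetric] field_simps)
    finally show ?thesis by (simp add: c_def)
  qed
  have rex: "a / b * exp (t - 1) = (\<eta> * \<tau>0) / ((1 - \<eta>) * exp 1 * \<tau>1)"
  proof -
    have "exp (- t) * exp (t - 1) = exp (- 1)" by (simp add: exp_add[symmetric])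
    hence "a / b * exp (t - 1) = c * exp (- 1)" unfolding ab by (simp add: mult.assoc)
    also have "\<dots> = c / exp 1" by (simp add: exp_minus field_simps)
    also have "\<dots> = (\<eta> * \<tau>0) / ((1 - \<eta>) * exp 1 * \<tau>1)" unfolding c_def
      by (simp add: divide_divide_eq_left ac_simps)
    finally show ?thesis .
  qed
  have key': "t * (a / b) / (1 + a / b)^2 \<le> L"
    using key[OF r0 t0'] rex by (simp add: L_def)
  have rr: "(a / b) / (1 + a / b)^2 = a * b / (a + b)^2"
    using b0 by (simp add: field_simps power2_eq_square)
  have "t * ((a / b) / (1 + a / b)^2) \<le> L" using key' by (simp only: times_divide_eq_right)
  hence "t * (a * b / (a + b)^2) \<le> L" unfolding rr .
  moreover have "x^2 * D * (a * b / (a + b)^2) = 2 * (t * (a * b / (a + b)^2))" by (simp add: t_def)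
  ultimately have "x^2 * D * (a * b / (a + b)^2) \<le> 2 * L" by linarith
  hence "x^2 * D^2 * (a * b / (a + b)^2) \<le> 2 * D * L"
  proof -
    have "D * (x^2 * D * (a * b / (a + b)^2)) \<le> D * (2 * L)"
      using \<open>x^2 * D * (a * b / (a + b)^2) \<le> 2 * L\<close> D0 by (intro mult_left_mono) auto
    thus ?thesis by (simp add: power2_eq_square ac_simps)
  qed
  moreover have "D * (a / (a + b)) \<ge> 0" using D0 a0 P0 by simp
  ultimately have "\<tau>1\<^sup>2 + D * (a / (a + b)) - x^2 * D^2 * (a * b / (a + b)^2) \<ge> \<tau>1\<^sup>2 - 2 * D * L"
    by linarith
  moreover have "(let P = a + b; N = \<tau>0^2 / 2 * a + \<tau>1^2 / 2 * b; M = (\<tau>0^2 / 2)^2 * a + (\<tau>1^2 / 2)^2 * b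
      in 2 * N / P - 4 * x^2 * M / P + 4 * x^2 * N^2 / P^2) = \<tau>1\<^sup>2 + D * (a / (a + b)) - x^2 * D^2 * (a * b / (a + b)^2)"
    unfolding D_def using alg3[of a b "\<tau>0^2" "\<tau>1^2" x] P0 by force
  moreover have "(let a = (\<eta> * (\<tau>0 / sqrt (2 * pi))) * exp (- (\<tau>0^2 / 2 * x^2));
              b = ((1 - \<eta>) * (\<tau>1 / sqrt (2 * pi))) * exp (- (\<tau>1^2 / 2 * x^2)); P = a + b;
          N = \<tau>0^2 / 2 * a + \<tau>1^2 / 2 * b; M = (\<tau>0^2 / 2)^2 * a + (\<tau>1^2 / 2)^2 * b
      in 2 * N / P - 4 * x^2 * M / P + 4 * x^2 * N^2 / P^2) = (let P = a + b; N = \<tau>0^2 / 2 * a + \<tau>1^2 / 2 * b; M = (\<tau>0^2 / 2)^2 * a + (\<tau>1^2 / 2)^2 * b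
      in 2 * N / P - 4 * x^2 * M / P + 4 * x^2 * N^2 / P^2)"
    unfolding a_def b_def by (simp only: Let_def)
  ultimately show ?thesis unfolding L_def[symmetric] D_def[symmetric] by linarith
qed

theorem mainTheorem11:
  fixes \<tau>0 \<tau>1 \<eta> :: real and \<xi> :: "real \<Rightarrow> real"
  assumes "\<tau>0 > 0" and "\<tau>1 > 0" and "\<tau>1\<^sup>2 < \<tau>0\<^sup>2"
    and "0 \<le> \<eta>" and "\<eta> < 1"
    and "\<xi> = (\<lambda>x. - ln (\<eta> * gauss_prec \<tau>0 x + (1 - \<eta>) * gauss_prec \<tau>1 x))"
  shows "\<forall>x. deriv (deriv \<xi>) x \<ge>
           \<tau>1\<^sup>2 - 2 * (\<tau>0\<^sup>2 - \<tau>1\<^sup>2) * ln (1 + (\<eta> * \<tau>0) / ((1 - \<eta>) * exp 1 * \<tau>1))"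
proof
  fix x :: real
  define A where "A = \<eta> * (\<tau>0 / sqrt (2 * pi))"
  define B where "B = (1 - \<eta>) * (\<tau>1 / sqrt (2 * pi))"
  define q0 where "q0 = \<tau>0^2 / 2"
  define q1 where "q1 = \<tau>1^2 / 2"
  have A0: "A \<ge> 0" using assms by (simp add: A_def)
  have B0: "B > 0" using assms by (simp add: B_def)
  have xi: "\<xi> = (\<lambda>x. - ln (A * exp (- (q0 * x^2)) + B * exp (- (q1 * x^2))))"
    unfolding assms(6) A_def B_def q0_def q1_def using assms(1,2)
    by (simp add: gauss_eq mult.assoc)
  have dxi: "deriv \<xi> = (\<lambda>x. 2 * x * (q0 * A * exp (- (q0 * x^2)) + q1 * B * exp (- (q1 * x^2))) / (A * exp (- (q0 * x^2)) + B * exp (- (q1 * x^2))))"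
    unfolding xi by (rule ext, rule DERIV_imp_deriv, rule d1[OF A0 B0])
  have "deriv (deriv \<xi>) x = (let a = A * exp (- (q0 * x^2)); b = B * exp (- (q1 * x^2)); P = a + b;
          N = q0 * a + q1 * b; M = q0^2 * a + q1^2 * b
      in 2 * N / P - 4 * x^2 * M / P + 4 * x^2 * N^2 / P^2)"
    unfolding dxi by (rule DERIV_imp_deriv, rule d2[OF A0 B0])
  also have "\<dots> \<ge> \<tau>1\<^sup>2 - 2 * (\<tau>0\<^sup>2 - \<tau>1\<^sup>2) * ln (1 + (\<eta> * \<tau>0) / ((1 - \<eta>) * exp 1 * \<tau>1))"
    unfolding A_def B_def q0_def q1_def by (rule final[OF assms(1-5)])
  finally show "deriv (deriv \<xi>) x \<ge>
           \<tau>1\<^sup>2 - 2 * (\<tau>0\<^sup>2 - \<tau>1\<^sup>2) * ln (1 + (\<eta> * \<tau>0) / ((1 - \<eta>) * exp 1 * \<tau>1))" .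
qed

end
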